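(* Every element of $\mathfrak m\wedge\mathfrak m$ of the form $$\tilde\upsilon=\sum_{\bar\alpha\in\bar\Omega}c_{\bar\alpha}\sum_{\beta\in\Omega,\ \bar\beta=\bar\alpha}X_\beta\wedge X_{-\beta},\qquad c_{\bar\alpha}\in\mathbb C,$$ is $\mathfrak k$-invariant, and conversely every element of $(\wedge^2\mathfrak m)^{\mathfrak k}$ can be written in this form with $c_{-\bar\alpha}=-c_{\bar\alpha}$ for all $\bar\alpha$.
   Context: $\mathfrak g$ is a simple complex Lie algebra, $\mathfrak h$ a Cartan subalgebra, $\Omega$ the root system with root spaces $\mathfrak g^\gamma$. $\{X_\gamma\}_{\gamma\in\Omega}$ together with a basis of $\mathfrak h$ is a basis of $\mathfrak g$ with $X_\gamma\in\mathfrak g^\gamma$, $(X_\gamma,X_{-\gamma})=1$ for the Killing form, and $[X_\alpha,X_\beta]=N_{\alpha\beta}X_{\alpha+\beta}$ where $N_{\alpha\beta}\ne0$ iff $\alpha+\beta\in\Omega$, $N_{\alpha\beta}=N_{\beta\gamma}=N_{\gamma\alpha}$ when $\alpha+\beta+\gamma=0$, $N_{\beta\alpha}=-N_{\alpha\beta}$, $N_{-\alpha,-\beta}=-N_{\alpha\beta}$. $P\subset\Omega$, $\Gamma(P)$ the lattice it generates, $\Omega_P=\Gamma(P)\cap\Omega$, $\mathfrak k=\mathfrak h\oplus\bigoplus_{\gamma\in\Omega_P}\mathfrak g^\gamma$, $\mathfrak m=\bigoplus_{\gamma\in\Omega\setminus\Omega_P}\mathfrak g^\gamma$. Quasi-roots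 $\bar\Omega$: nonzero images of roots in $\Gamma(\Omega)/\Gamma(P)$; $\bar\beta$ denotes the image of $\beta$. *)

theory Defs
  imports "HOL-Analysis.Analysis"
begin

text \<open>
The real form of the dual of the Cartan subalgebra is a Euclidean space 'a
(inner product = dual of the Killing form); the root system Om of the simple complex Lie
algebra g lives in it.  The Lie algebra g has the basis {X_gamma} together with a basis of h;
the constants N describe [X_a, X_b] = N a b X_(a+b).
\<close>

definition simple_root_system :: "'a::euclidean_space set \<Rightarrow> bool" where
  "simple_root_system Om \<longleftrightarrow>
     finite Om \<and> 0 \<notin> Om \<and> span Om = UNIV \<and>
     (\<forall>a\<in>Om. \<forall>b\<in>Om. b - (2 * (b \<bullet> a) / (a \<bullet> a)) *\<^sub>R a \<in> Om) \<and>
     (\<forall>a\<in>Om. \<forall>b\<in>Om. 2 * (b \<bullet> a) / (a \<bullet> a) \<in> \<int>) \<and>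
     (\<forall>a\<in>Om. \<forall>t::real. t *\<^sub>R a \<in> Om \<longrightarrow> t = 1 \<or> t = -1) \<and>
     \<not> (\<exists>A B. A \<noteq> {} \<and> B \<noteq> {} \<and> A \<union> B = Om \<and> A \<inter> B = {} \<and>
              (\<forall>a\<in>A. \<forall>b\<in>B. a \<bullet> b = 0))"

definition chevalley_constants :: "'a::euclidean_space set \<Rightarrow> ('a \<Rightarrow> 'a \<Rightarrow> complex) \<Rightarrow> bool" where
  "chevalley_constants Om N \<longleftrightarrow>
     (\<forall>a\<in>Om. \<forall>b\<in>Om. N a b \<noteq> 0 \<longleftrightarrow> a + b \<in> Om) \<and>
     (\<forall>a\<in>Om. \<forall>b\<in>Om. \<forall>c\<in>Om. a + b + c = 0 \<longrightarrow> N a b = N b c \<and> N b c = N c a) \<and>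
     (\<forall>a\<in>Om. \<forall>b\<in>Om. N b a = - N a b) \<and>
     (\<forall>a\<in>Om. \<forall>b\<in>Om. N (-a) (-b) = - N a b)"

definition int_lattice :: "'a::euclidean_space set \<Rightarrow> 'a set" where
  "int_lattice P = {x. \<exists>c::'a \<Rightarrow> int. x = (\<Sum>p\<in>P. of_int (c p) *\<^sub>R p)}"

definition roots_P :: "'a::euclidean_space set \<Rightarrow> 'a set \<Rightarrow> 'a set" where
  "roots_P Om P = int_lattice P \<inter> Om"

text \<open>Roots whose root spaces make up m.\<close>
definition roots_m :: "'a::euclidean_space set \<Rightarrow> 'a set \<Rightarrow> 'a set" where
  "roots_m Om P = Om - roots_P Om P"

text \<open>Quasi-roots: the nonzero images of roots in Gamma(Om)/Gamma(P), represented as cosets.\<close>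
definition qclass :: "'a::euclidean_space set \<Rightarrow> 'a \<Rightarrow> 'a set" where
  "qclass P b = (\<lambda>l. b + l) ` int_lattice P"

definition quasi_roots :: "'a::euclidean_space set \<Rightarrow> 'a set \<Rightarrow> 'a set set" where
  "quasi_roots Om P = qclass P ` roots_m Om P"

text \<open>Elements of m wedge m, in the basis X_b wedge X_d: antisymmetric coefficient functions w
  supported on pairs of roots of m; w stands for the tensor sum of w b d X_b (x) X_d.\<close>
definition wedge2_m :: "'a::euclidean_space set \<Rightarrow> 'a set \<Rightarrow> ('a \<Rightarrow> 'a \<Rightarrow> complex) set" where
  "wedge2_m Om P = {w. (\<forall>u v. w u v = - w v u) \<and>
       (\<forall>u v. w u v \<noteq> 0 \<longrightarrow> u \<in> roots_m Om P \<and> v \<in> roots_m Om P)}"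

definition wedge :: "'a \<Rightarrow> 'a \<Rightarrow> ('a \<Rightarrow> 'a \<Rightarrow> complex)" where
  "wedge b d = (\<lambda>u v. (if u = b \<and> v = d then 1 else 0) - (if u = d \<and> v = b then 1 else 0))"

text \<open>Evaluation of a root b at h = h1 + i h2 in h.\<close>
definition root_eval :: "'a::euclidean_space \<Rightarrow> 'a \<Rightarrow> 'a \<Rightarrow> complex" where
  "root_eval b h1 h2 = complex_of_real (b \<bullet> h1) + \<i> * complex_of_real (b \<bullet> h2)"

text \<open>Coefficient of X_u in [x, X_b], for x = h + sum over gamma in Om_P of c gamma X_gamma in k,
  and b a root of m.\<close>
definition ad_k :: "'a::euclidean_space set \<Rightarrow> 'a set \<Rightarrow> ('a \<Rightarrow> 'a \<Rightarrow> complex) \<Rightarrow>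
    'a \<Rightarrow> 'a \<Rightarrow> ('a \<Rightarrow> complex) \<Rightarrow> 'a \<Rightarrow> 'a \<Rightarrow> complex" where
  "ad_k Om P N h1 h2 c u b =
     (if u = b then root_eval b h1 h2 else 0) +
     (\<Sum>g\<in>roots_P Om P. c g * N g b * (if u = g + b then 1 else 0))"

definition k_act :: "'a::euclidean_space set \<Rightarrow> 'a set \<Rightarrow> ('a \<Rightarrow> 'a \<Rightarrow> complex) \<Rightarrow>
    'a \<Rightarrow> 'a \<Rightarrow> ('a \<Rightarrow> complex) \<Rightarrow> ('a \<Rightarrow> 'a \<Rightarrow> complex) \<Rightarrow> ('a \<Rightarrow> 'a \<Rightarrow> complex)" where
  "k_act Om P N h1 h2 c w = (\<lambda>u v.
      (\<Sum>b\<in>roots_m Om P. ad_k Om P N h1 h2 c u b * w b v) +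
      (\<Sum>d\<in>roots_m Om P. ad_k Om P N h1 h2 c v d * w u d))"

definition k_invariant :: "'a::euclidean_space set \<Rightarrow> 'a set \<Rightarrow> ('a \<Rightarrow> 'a \<Rightarrow> complex) \<Rightarrow>
    ('a \<Rightarrow> 'a \<Rightarrow> complex) \<Rightarrow> bool" where
  "k_invariant Om P N w \<longleftrightarrow>
     (\<forall>h1 h2 (c::'a \<Rightarrow> complex). k_act Om P N h1 h2 c w = (\<lambda>u v. 0))"

definition upsilon :: "'a::euclidean_space set \<Rightarrow> 'a set \<Rightarrow> ('a set \<Rightarrow> complex) \<Rightarrow>
    ('a \<Rightarrow> 'a \<Rightarrow> complex)" where
  "upsilon Om P c = (\<lambda>u v. \<Sum>A\<in>quasi_roots Om P.
      c A * (\<Sum>b\<in>{b\<in>Om. qclass P b = A}. wedge b (-b) u v))"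

end

theory Submission
  imports Defs "HOL-Library.Multiset"
begin

lemma lat_0: "0 \<in> int_lattice P"
  unfolding int_lattice_def by (rule CollectI, rule exI[of _ "\<lambda>_. 0"]) simp

lemma lat_add: "x \<in> int_lattice P \<Longrightarrow> y \<in> int_lattice P \<Longrightarrow> x + y \<in> int_lattice P"
  unfolding int_lattice_def
proof safe
  fix c d :: "'a \<Rightarrow> int"
  show "\<exists>e. (\<Sum>p\<in>P. of_int (c p) *\<^sub>R p) + (\<Sum>p\<in>P. of_int (d p) *\<^sub>R p) = (\<Sum>p\<in>P. of_int (e p) *\<^sub>R p)"
    by (rule exI[of _ "\<lambda>p. c p + d p"]) (simp add: sum.distrib scaleR_add_left)
qed

lemma lat_neg: "x \<in> int_lattice P \<Longrightarrow> - x \<in> int_lattice P"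
  unfolding int_lattice_def
proof safe
  fix c :: "'a \<Rightarrow> int"
  show "\<exists>e. - (\<Sum>p\<in>P. of_int (c p) *\<^sub>R p) = (\<Sum>p\<in>P. of_int (e p) *\<^sub>R p)"
    by (rule exI[of _ "\<lambda>p. - c p"]) (simp add: sum_negf)
qed

lemma lat_diff: "x \<in> int_lattice P \<Longrightarrow> y \<in> int_lattice P \<Longrightarrow> x - y \<in> int_lattice P"
  using lat_add[of x P "-y"] lat_neg[of y P] by simp

lemma lat_mem: "finite P \<Longrightarrow> p \<in> P \<Longrightarrow> p \<in> int_lattice P"
  unfolding int_lattice_def
  by (rule CollectI, rule exI[of _ "\<lambda>q. if q = p then 1 else 0"])
     (simp add: if_distrib[of "\<lambda>t. of_int t *\<^sub>R _"] cong: if_cong)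

lemma qclass_mem: "x \<in> qclass P y \<longleftrightarrow> x - y \<in> int_lattice P"
proof
  assume "x \<in> qclass P y"
  then obtain l where "l \<in> int_lattice P" "x = y + l" unfolding qclass_def by blast
  then show "x - y \<in> int_lattice P" by simp
next
  assume "x - y \<in> int_lattice P"
  moreover have "x = y + (x - y)" by simp
  ultimately show "x \<in> qclass P y" unfolding qclass_def by blast
qed

lemma qclass_eq: "qclass P x = qclass P y \<longleftrightarrow> x - y \<in> int_lattice P"
proof
  assume "qclass P x = qclass P y"
  moreover have "x \<in> qclass P x" using qclass_mem[of x P x] lat_0[of P] by simp
  ultimately show "x - y \<in> int_lattice P" using qclass_mem by blast
next
  assume h: "x - y \<in> int_lattice P"
  show "qclass P x = qclass P y"
  proof (rule set_eqI)
    fix z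
    have e1: "z - y = (z - x) + (x - y)" and e2: "z - x = (z - y) - (x - y)" by simp_all
    show "z \<in> qclass P x \<longleftrightarrow> z \<in> qclass P y"
      unfolding qclass_mem
    proof
      assume "z - x \<in> int_lattice P" then show "z - y \<in> int_lattice P" unfolding e1 using h by (rule lat_add)
    next
      assume "z - y \<in> int_lattice P" then show "z - x \<in> int_lattice P" unfolding e2 using h by (rule lat_diff)
    qed
  qed
qed

lemma qclass_neg: "uminus ` qclass P b = qclass P (-b)"
proof (rule set_eqI)
  fix z
  have "z \<in> uminus ` qclass P b \<longleftrightarrow> -z \<in> qclass P b"
    by (metis image_iff minus_minus)
  also have "\<dots> \<longleftrightarrow> z - (-b) \<in> int_lattice P"
  proof -
    have eq: "z - (-b) = -(-z - b)" by simp
    show ?thesis unfolding qclass_mem eq using lat_neg by (metis minus_minus)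
  qed
  finally show "z \<in> uminus ` qclass P b \<longleftrightarrow> z \<in> qclass P (-b)" using qclass_mem by blast
qed

lemma srs:
  assumes "simple_root_system Om"
  shows srs_fin: "finite Om" and srs_nz: "0 \<notin> Om"
    and srs_refl: "\<And>x y. x \<in> Om \<Longrightarrow> y \<in> Om \<Longrightarrow> y - (2 * (y \<bullet> x) / (x \<bullet> x)) *\<^sub>R x \<in> Om"
    and srs_int: "\<And>x y. x \<in> Om \<Longrightarrow> y \<in> Om \<Longrightarrow> 2 * (y \<bullet> x) / (x \<bullet> x) \<in> \<int>"
proof -
  note h = assms[unfolded simple_root_system_def]
  from h show "finite Om" by (elim conjE)
  from h show "0 \<notin> Om" by (elim conjE)
  from h show "\<And>x y. x \<in> Om \<Longrightarrow> y \<in> Om \<Longrightarrow> y - (2 * (y \<bullet> x) / (x \<bullet> x)) *\<^sub>R x \<in> Om" by (elim conjE) (drule bspec, assumption, drule bspec, assumption, assumption)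
  from h show "\<And>x y. x \<in> Om \<Longrightarrow> y \<in> Om \<Longrightarrow> 2 * (y \<bullet> x) / (x \<bullet> x) \<in> \<int>" by (elim conjE) (drule bspec, assumption, drule bspec, assumption, assumption)
qed

lemma rs_neg:
  assumes "simple_root_system Om" "a \<in> Om" shows "-a \<in> Om"
proof -
  have r: "a - (2 * (a \<bullet> a) / (a \<bullet> a)) *\<^sub>R a \<in> Om" using srs_refl[OF assms(1)] assms(2) by blast
  have "a \<noteq> 0" using srs_nz[OF assms(1)] assms(2) by blast
  then have "a - (2 * (a \<bullet> a) / (a \<bullet> a)) *\<^sub>R a = -a" by (simp add: scaleR_2)
  with r show ?thesis by simp
qed

lemma rs_K:
  assumes rs: "simple_root_system Om" and a: "a \<in> Om" and b: "b \<in> Om" and pos: "a \<bullet> b > 0" and ne: "a \<noteq> b"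
  shows "a - b \<in> Om"
proof -
  have refl: "\<And>x y. x \<in> Om \<Longrightarrow> y \<in> Om \<Longrightarrow> y - (2 * (y \<bullet> x) / (x \<bullet> x)) *\<^sub>R x \<in> Om"
    and int: "\<And>x y. x \<in> Om \<Longrightarrow> y \<in> Om \<Longrightarrow> 2 * (y \<bullet> x) / (x \<bullet> x) \<in> \<int>"
    and nz: "0 \<notin> Om"
    using srs_refl[OF rs] srs_int[OF rs] srs_nz[OF rs] by blast+
  have a0: "a \<bullet> a > 0" using a nz by (metis inner_gt_zero_iff)
  have b0: "b \<bullet> b > 0" using b nz by (metis inner_gt_zero_iff)
  obtain i where i: "2 * (a \<bullet> b) / (b \<bullet> b) = of_int i" using int[OF b a] by (auto elim: Ints_cases)
  obtain j where j: "2 * (b \<bullet> a) / (a \<bullet> a) = of_int j" using int[OF a b] by (auto elim: Ints_cases)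
  have "of_int i > (0::real)" unfolding i[symmetric] using pos b0 by simp
  then have ip: "i > 0" by simp
  have "of_int j > (0::real)" unfolding j[symmetric] using pos a0 by (simp add: inner_commute)
  then have jp: "j > 0" by simp
  have cs: "(a \<bullet> b)^2 \<le> (a \<bullet> a) * (b \<bullet> b)" by (rule Cauchy_Schwarz_ineq)
  have prod: "of_int (i * j) = 4 * (a \<bullet> b)^2 / ((a \<bullet> a) * (b \<bullet> b))"
    unfolding of_int_mult i[symmetric] j[symmetric] by (simp add: inner_commute power2_eq_square)
  have "4 * (a \<bullet> b)^2 / ((a \<bullet> a) * (b \<bullet> b)) \<le> 4"
    using cs a0 b0 by (simp add: divide_le_eq)
  then have "of_int (i * j) \<le> (4::real)" using prod by simp
  then have ij: "i * j \<le> 4" by linarith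
  consider "i = 1" | "j = 1" | "i = 2 \<and> j = 2"
  proof -
    have "i = 1 \<or> j = 1 \<or> (i = 2 \<and> j = 2)"
    proof (rule ccontr)
      assume "\<not> ?thesis"
      then have "i \<ge> 2" "j \<ge> 2" "i \<noteq> 2 \<or> j \<noteq> 2" using ip jp by auto
      moreover have "i * j \<ge> 2 * j" using \<open>i \<ge> 2\<close> \<open>j \<ge> 2\<close> by (simp add: mult_right_mono)
      moreover have "i * j \<ge> i * 2" using \<open>i \<ge> 2\<close> \<open>j \<ge> 2\<close> by (simp add: mult_left_mono)
      ultimately show False using ij by linarith
    qed
    then show ?thesis using that by blast
  qed
  then show ?thesis
  proof cases
    case 1
    then show ?thesis using refl[OF b a] i by simp
  next
    case 2
    then have "b - a \<in> Om" using refl[OF a b] j by simp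
    then have "-(b - a) \<in> Om" by (rule rs_neg[OF rs])
    then show ?thesis by simp
  next
    case 3
    then have "2 * (a \<bullet> b) / (b \<bullet> b) = 2" "2 * (b \<bullet> a) / (a \<bullet> a) = 2" using i j by simp_all
    then have "a \<bullet> b = b \<bullet> b" "b \<bullet> a = a \<bullet> a" using a0 b0 by (simp_all add: divide_eq_eq)
    then have "a \<bullet> b = b \<bullet> b" "a \<bullet> b = a \<bullet> a" by (simp_all add: inner_commute)
    then have "(a - b) \<bullet> (a - b) = 0" by (simp add: inner_diff inner_commute)
    then show ?thesis using ne by simp
  qed
qed


lemma inner_sum_mset_nonneg:
  fixes x :: "'a::real_inner"
  shows "(\<forall>y\<in>#M. 0 \<le> y \<bullet> x) \<Longrightarrow> 0 \<le> sum_mset M \<bullet> x"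
  by (induction M) (auto simp: inner_add_left)

lemma conn_mset:
  assumes rs: "simple_root_system Om"
    and PsiL: "\<And>x. x \<in> Psi \<longleftrightarrow> x \<in> Om \<and> x \<in> L"
    and Ladd: "\<And>x y. x \<in> L \<Longrightarrow> y \<in> L \<Longrightarrow> x + y \<in> L"
    and Lneg: "\<And>x. x \<in> L \<Longrightarrow> -x \<in> L"
    and inv: "\<And>u g. u \<in> Om \<Longrightarrow> u \<notin> L \<Longrightarrow> g \<in> Psi \<Longrightarrow> u - g \<in> Om \<Longrightarrow> phi u = phi (u - g)"
  shows "set_mset M \<subseteq> Psi \<Longrightarrow> a \<in> Om \<Longrightarrow> a \<notin> L \<Longrightarrow> b \<in> Om \<Longrightarrow> b \<notin> L \<Longrightarrow>
         a - b = sum_mset M \<Longrightarrow> phi a = phi b"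
proof (induction "size M" arbitrary: M a b rule: less_induct)
  case less
  have Ldiff: "\<And>x y. x \<in> L \<Longrightarrow> y \<in> L \<Longrightarrow> x - y \<in> L" using Ladd Lneg by (metis diff_conv_add_uminus)
  have nz: "0 \<notin> Om" using srs_nz[OF rs] .
  show ?case
  proof (cases "\<exists>x y M'. M = add_mset x (add_mset y M') \<and> x \<bullet> y < 0")
    case True
    then obtain x y M' where M: "M = add_mset x (add_mset y M')" and xy: "x \<bullet> y < 0" by blast
    have x: "x \<in> Om" "x \<in> L" and y: "y \<in> Om" "y \<in> L" using less.prems(1) M PsiL by auto
    have sub: "set_mset M' \<subseteq> Psi" using less.prems(1) M by auto
    show ?thesis
    proof (cases "x + y = 0")
      case True
      have "a - b = sum_mset M'" using less.prems(6) M True by (simp add: algebra_simps)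
      then show ?thesis using less.hyps[of M' a b] M sub less.prems by simp
    next
      case False
      have "x \<noteq> -y" using False by auto
      then have "x - (-y) \<in> Om" using rs_K[OF rs x(1) rs_neg[OF rs y(1)]] xy
        by (simp add: inner_minus_right)
      then have "x + y \<in> Psi" using PsiL Ladd x y by simp
      then have sub2: "set_mset (add_mset (x + y) M') \<subseteq> Psi" using sub by simp
      have "a - b = sum_mset (add_mset (x + y) M')" using less.prems(6) M by (simp add: algebra_simps)
      then show ?thesis using less.hyps[of "add_mset (x + y) M'" a b] M sub2 less.prems by simp
    qed
  next
    case False
    note noneg = False
    show ?thesis
    proof (cases "M = {#}")
      case True
      then show ?thesis using less.prems(6) by simp
    next
      case False
      then obtain x M' where M: "M = add_mset x M'" by (metis multiset_cases)
      have x: "x \<in> Om" "x \<in> L" using less.prems(1) M PsiL by auto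
      have sub: "set_mset M' \<subseteq> Psi" using less.prems(1) M by auto
      have "\<forall>y\<in>#M'. 0 \<le> y \<bullet> x"
      proof
        fix y assume "y \<in># M'"
        then have "M = add_mset x (add_mset y (M' - {#y#}))" using M by simp
        then show "0 \<le> y \<bullet> x" using noneg by (metis inner_commute not_less)
      qed
      then have "0 \<le> sum_mset M' \<bullet> x" by (rule inner_sum_mset_nonneg)
      moreover have "x \<bullet> x > 0" using x nz by (metis inner_gt_zero_iff)
      moreover have "(a - b) \<bullet> x = x \<bullet> x + sum_mset M' \<bullet> x" using less.prems(6) M by (simp add: inner_add_left)
      ultimately have "(a - b) \<bullet> x > 0" by linarith
      then have "a \<bullet> x - b \<bullet> x > 0" by (simp add: inner_diff_left)
      then have "a \<bullet> x > 0 \<or> b \<bullet> x < 0" by linarith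
      then show ?thesis
      proof
        assume ax: "a \<bullet> x > 0"
        have "a \<noteq> x" using x less.prems by auto
        then have a': "a - x \<in> Om" using rs_K[OF rs less.prems(2) x(1) ax] by simp
        have a'L: "a - x \<notin> L" using less.prems(3) x Ladd by (metis diff_add_cancel)
        have e1: "phi a = phi (a - x)" using inv[OF less.prems(2,3)] less.prems(1) M a' by simp
        have "(a - x) - b = sum_mset M'" using less.prems(6) M by (simp add: algebra_simps)
        then have "phi (a - x) = phi b" using less.hyps[of M' "a - x" b] M sub a' a'L less.prems by simp
        then show ?thesis using e1 by simp
      next
        assume bx: "b \<bullet> x < 0"
        have "-b \<noteq> x" using x less.prems Lneg by (metis minus_minus)
        then have "-b - x \<in> Om" using rs_K[OF rs rs_neg[OF rs less.prems(4)] x(1)] bx by (simp add: inner_minus_left)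
        then have "-(-b - x) \<in> Om" using rs_neg[OF rs] by blast
        then have b': "b + x \<in> Om" by (simp add: add.commute)
        have b'L: "b + x \<notin> L" using less.prems(5) x Ldiff by (metis add_diff_cancel)
        have e1: "phi (b + x) = phi b" using inv[OF b' b'L, of x] less.prems(1) M less.prems(4) by simp
        have "a - (b + x) = sum_mset M'" using less.prems(6) M by (simp add: algebra_simps)
        then have "phi a = phi (b + x)" using less.hyps[of M' a "b + x"] M sub b' b'L less.prems by simp
        then show ?thesis using e1 by simp
      qed
    qed
  qed
qed


lemma sum_mset_rep: "sum_mset (replicate_mset n (p::'a::real_vector)) = of_nat n *\<^sub>R p"
  by (induction n) (simp_all add: algebra_simps)

lemma single_mset:
  "\<exists>M. set_mset M \<subseteq> {p, -p} \<and> sum_mset M = of_int k *\<^sub>R (p::'a::real_vector)"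
proof (cases "k \<ge> 0")
  case True
  show ?thesis
    by (rule exI[of _ "replicate_mset (nat k) p"]) (use True in \<open>simp add: sum_mset_rep\<close>)
next
  case False
  have "of_nat (nat (-k)) *\<^sub>R (-p) = of_int k *\<^sub>R p" using False by simp
  then show ?thesis
    by (intro exI[of _ "replicate_mset (nat (-k)) (-p)"]) (simp add: sum_mset_rep)
qed

lemma lat_mset:
  assumes rs: "simple_root_system Om" and PO: "P \<subseteq> Om" and x: "x \<in> int_lattice P"
  shows "\<exists>M. set_mset M \<subseteq> roots_P Om P \<and> sum_mset M = x"
proof -
  have finP: "finite P" using srs_fin[OF rs] PO finite_subset by blast
  obtain c where xc: "x = (\<Sum>p\<in>P. of_int (c p) *\<^sub>R p)" using x unfolding int_lattice_def by blast
  have pm: "\<And>p. p \<in> P \<Longrightarrow> p \<in> roots_P Om P \<and> -p \<in> roots_P Om P"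
    unfolding roots_P_def using PO lat_mem[OF finP] lat_neg rs_neg[OF rs] by blast
  have "\<And>S. finite S \<Longrightarrow> S \<subseteq> P \<Longrightarrow> \<exists>M. set_mset M \<subseteq> roots_P Om P \<and> sum_mset M = (\<Sum>p\<in>S. of_int (c p) *\<^sub>R p)"
  proof -
    fix S :: "'a set"
    assume "finite S" "S \<subseteq> P"
    then show "\<exists>M. set_mset M \<subseteq> roots_P Om P \<and> sum_mset M = (\<Sum>p\<in>S. of_int (c p) *\<^sub>R p)"
    proof (induction S rule: finite_induct)
      case empty
      show ?case by (rule exI[of _ "{#}"]) simp
    next
      case (insert p S)
      then obtain M where M: "set_mset M \<subseteq> roots_P Om P" "sum_mset M = (\<Sum>p\<in>S. of_int (c p) *\<^sub>R p)" by auto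
      obtain M1 where M1: "set_mset M1 \<subseteq> {p, -p}" "sum_mset M1 = of_int (c p) *\<^sub>R p" using single_mset by blast
      have "set_mset M1 \<subseteq> roots_P Om P" using M1(1) pm insert.prems by blast
      then show ?case using M M1 insert.hyps
        by (intro exI[of _ "M1 + M"]) simp
    qed
  qed
  then show ?thesis using finP xc by blast
qed

lemma ad_eq:
  assumes "finite (roots_P Om P)"
  shows "ad_k Om P N h1 h2 c u b = (if u = b then root_eval b h1 h2 else 0) +
     (if u - b \<in> roots_P Om P then c (u - b) * N (u - b) b else 0)"
proof -
  have "(\<Sum>g\<in>roots_P Om P. c g * N g b * (if u = g + b then 1 else 0)) =
        (\<Sum>g\<in>roots_P Om P. if g = u - b then c g * N g b else 0)"
    by (rule sum.cong) (auto simp: algebra_simps)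
  also have "\<dots> = (if u - b \<in> roots_P Om P then c (u - b) * N (u - b) b else 0)"
    using assms by (simp add: sum.delta')
  finally show ?thesis unfolding ad_k_def by simp
qed

lemma m_iff: "u \<in> roots_m Om P \<longleftrightarrow> u \<in> Om \<and> u \<notin> int_lattice P"
  unfolding roots_m_def roots_P_def by blast

lemma Psi_iff: "u \<in> roots_P Om P \<longleftrightarrow> u \<in> Om \<and> u \<in> int_lattice P"
  unfolding roots_P_def by blast

lemma m_neg: "simple_root_system Om \<Longrightarrow> u \<in> roots_m Om P \<Longrightarrow> -u \<in> roots_m Om P"
  unfolding m_iff using rs_neg lat_neg by (metis minus_minus)

lemma kact_form:
  assumes rs: "simple_root_system Om"
    and w: "\<And>u v. w u v = (if u \<in> roots_m Om P \<and> v = -u then f u else 0)"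
  shows "k_act Om P N h1 h2 c w u v =
     (if -v \<in> roots_m Om P then ad_k Om P N h1 h2 c u (-v) * f (-v) else 0) +
     (if u \<in> roots_m Om P then ad_k Om P N h1 h2 c v (-u) * f u else 0)"
proof -
  have finm: "finite (roots_m Om P)" using srs_fin[OF rs] unfolding roots_m_def by simp
  let ?ad = "ad_k Om P N h1 h2 c"
  have "(\<Sum>b\<in>roots_m Om P. ?ad u b * w b v) = (\<Sum>b\<in>roots_m Om P. if b = -v then ?ad u (-v) * f (-v) else 0)"
    by (rule sum.cong) (auto simp: w)
  also have "\<dots> = (if -v \<in> roots_m Om P then ?ad u (-v) * f (-v) else 0)"
    using finm by (simp add: sum.delta)
  finally have 1: "(\<Sum>b\<in>roots_m Om P. ?ad u b * w b v) = (if -v \<in> roots_m Om P then ?ad u (-v) * f (-v) else 0)" .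
  have "(\<Sum>d\<in>roots_m Om P. ?ad v d * w u d) = (\<Sum>d\<in>roots_m Om P. if d = -u then (if u \<in> roots_m Om P then ?ad v (-u) * f u else 0) else 0)"
    by (rule sum.cong) (auto simp: w)
  also have "\<dots> = (if u \<in> roots_m Om P then ?ad v (-u) * f u else 0)"
    using finm m_neg[OF rs, of u P] by (simp add: sum.delta)
  finally have 2: "(\<Sum>d\<in>roots_m Om P. ?ad v d * w u d) = (if u \<in> roots_m Om P then ?ad v (-u) * f u else 0)" .
  show ?thesis unfolding k_act_def using 1 2 by simp
qed

lemma ups_formula:
  assumes rs: "simple_root_system Om"
  shows "upsilon Om P c u v = (if u \<in> roots_m Om P \<and> v = -u then c (qclass P u) - c (qclass P (-u)) else 0)"
proof -
  let ?m = "roots_m Om P" and ?L = "int_lattice P" and ?Q = "quasi_roots Om P"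
  have finm: "finite ?m" using srs_fin[OF rs] unfolding roots_m_def by simp
  have finQ: "finite ?Q" unfolding quasi_roots_def using finm by simp
  have S: "\<And>A. A \<in> ?Q \<Longrightarrow> {b\<in>Om. qclass P b = A} = {b\<in>?m. qclass P b = A}"
  proof -
    fix A assume "A \<in> ?Q"
    then obtain b0 where b0: "b0 \<in> ?m" "A = qclass P b0" unfolding quasi_roots_def by blast
    show "{b\<in>Om. qclass P b = A} = {b\<in>?m. qclass P b = A}"
    proof (rule set_eqI, rule iffI)
      fix b assume "b \<in> {b\<in>Om. qclass P b = A}"
      then have "b \<in> Om" "b - b0 \<in> ?L" "qclass P b = A" using b0 qclass_eq by auto
      moreover have "b \<notin> ?L"
      proof
        assume "b \<in> ?L"
        then have "b - (b - b0) \<in> ?L" using \<open>b - b0 \<in> ?L\<close> lat_diff by blast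
        then show False using b0 m_iff by auto
      qed
      ultimately show "b \<in> {b\<in>?m. qclass P b = A}" using m_iff by auto
    qed (auto simp: m_iff)
  qed
  have "upsilon Om P c u v = (\<Sum>A\<in>?Q. \<Sum>b\<in>{b\<in>?m. qclass P b = A}. c (qclass P b) * wedge b (-b) u v)"
    unfolding upsilon_def
  proof (rule sum.cong[OF refl])
    fix A assume A: "A \<in> ?Q"
    show "c A * (\<Sum>b\<in>{b\<in>Om. qclass P b = A}. wedge b (-b) u v) =
          (\<Sum>b\<in>{b\<in>?m. qclass P b = A}. c (qclass P b) * wedge b (-b) u v)"
      unfolding S[OF A] sum_distrib_left by (rule sum.cong) auto
  qed
  also have "\<dots> = (\<Sum>b\<in>?m. c (qclass P b) * wedge b (-b) u v)"
    by (rule sum.group[OF finm finQ]) (auto simp: quasi_roots_def)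
  also have "\<dots> = (\<Sum>b\<in>?m. (if b = u then (if v = -u then c (qclass P u) else 0) else 0) -
                              (if b = v then (if u = -v then c (qclass P v) else 0) else 0))"
    by (rule sum.cong) (auto simp: wedge_def)
  also have "\<dots> = (if u \<in> ?m then (if v = -u then c (qclass P u) else 0) else 0) -
                  (if v \<in> ?m then (if u = -v then c (qclass P v) else 0) else 0)"
    using finm by (simp add: sum_subtractf sum.delta)
  also have "\<dots> = (if u \<in> ?m \<and> v = -u then c (qclass P u) - c (qclass P (-u)) else 0)"
    using m_neg[OF rs, of u P] m_neg[OF rs, of v P] by auto
  finally show ?thesis .
qed


lemma mult_minus_right_add_zero: "(a::complex) * (- b) * x + a * b * x = 0"
  by simp

theorem mainTheorem17:
  fixes Om :: "'a::euclidean_space set" and P :: "'a set" and N :: "'a \<Rightarrow> 'a \<Rightarrow> complex"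
  assumes "simple_root_system Om"
    and "P \<subseteq> Om"
    and "chevalley_constants Om N"
  shows "(\<forall>c. upsilon Om P c \<in> wedge2_m Om P \<and> k_invariant Om P N (upsilon Om P c)) \<and>
         (\<forall>w\<in>wedge2_m Om P. k_invariant Om P N w \<longrightarrow>
            (\<exists>c. w = upsilon Om P c \<and>
                 (\<forall>A\<in>quasi_roots Om P. c (uminus ` A) = - c A)))"
proof -
  note rs = assms(1)
  let ?m = "roots_m Om P" and ?L = "int_lattice P" and ?Psi = "roots_P Om P"
  have finPsi: "finite ?Psi" using srs_fin[OF rs] unfolding roots_P_def by simp
  have Nnz: "\<And>a b. a \<in> Om \<Longrightarrow> b \<in> Om \<Longrightarrow> N a b \<noteq> 0 \<longleftrightarrow> a + b \<in> Om"
    and Ncyc: "\<And>a b c. a \<in> Om \<Longrightarrow> b \<in> Om \<Longrightarrow> c \<in> Om \<Longrightarrow> a + b + c = 0 \<Longrightarrow> N a b = N b c \<and> N b c = N c a"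
    and Nanti: "\<And>a b. a \<in> Om \<Longrightarrow> b \<in> Om \<Longrightarrow> N b a = - N a b"
    using assms(3) unfolding chevalley_constants_def by blast+
  have nz: "0 \<notin> Om" using srs_nz[OF rs] .
  have Nrel: "\<And>g x y. g \<in> Om \<Longrightarrow> x \<in> Om \<Longrightarrow> y \<in> Om \<Longrightarrow> g + x + y = 0 \<Longrightarrow> N g x = - N g y"
  proof -
    fix g x y assume h: "g \<in> Om" "x \<in> Om" "y \<in> Om" "g + x + y = 0"
    have "N g x = N y g" using Ncyc[OF h] by simp
    also have "\<dots> = - N g y" using Nanti[OF h(1) h(3)] .
    finally show "N g x = - N g y" .
  qed
  have re_neg: "\<And>x h1 h2. root_eval (-x) h1 h2 = - root_eval x h1 h2"
    unfolding root_eval_def by (simp add: algebra_simps)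
  have part1: "upsilon Om P c \<in> wedge2_m Om P \<and> k_invariant Om P N (upsilon Om P c)" for c
  proof
    let ?f = "\<lambda>x. c (qclass P x) - c (qclass P (-x))"
    have w: "\<And>u v. upsilon Om P c u v = (if u \<in> ?m \<and> v = -u then ?f u else 0)"
      by (rule ups_formula[OF rs])
    show "upsilon Om P c \<in> wedge2_m Om P"
      unfolding wedge2_m_def using m_neg[OF rs, of _ P] by (auto simp: w)
    show "k_invariant Om P N (upsilon Om P c)"
      unfolding k_invariant_def
    proof (intro allI ext)
      fix h1 h2 c' u v
      let ?ad = "ad_k Om P N h1 h2 c'"
      have K: "k_act Om P N h1 h2 c' (upsilon Om P c) u v =
         (if -v \<in> ?m then ?ad u (-v) * ?f (-v) else 0) + (if u \<in> ?m then ?ad v (-u) * ?f u else 0)"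
        by (rule kact_form[OF rs w])
      show "k_act Om P N h1 h2 c' (upsilon Om P c) u v = 0"
      proof (cases "v = -u")
        case True
        have "0 \<notin> ?Psi" using nz Psi_iff by blast
        then show ?thesis unfolding K using True by (simp add: ad_eq[OF finPsi] re_neg)
      next
        case False
        then have uv: "u \<noteq> -v" "v \<noteq> -u" by auto
        have K2: "k_act Om P N h1 h2 c' (upsilon Om P c) u v =
           (if -v \<in> ?m \<and> u + v \<in> ?Psi then c' (u + v) * N (u + v) (-v) * ?f (-v) else 0) +
           (if u \<in> ?m \<and> u + v \<in> ?Psi then c' (u + v) * N (u + v) (-u) * ?f u else 0)"
          unfolding K using uv by (simp add: ad_eq[OF finPsi] add.commute)
        show ?thesis
        proof (cases "u + v \<in> ?Psi")
          case False
          then show ?thesis unfolding K2 by simp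
        next
          case True
          define g where "g = u + v"
          have g: "g \<in> Om" "g \<in> ?L" using True Psi_iff g_def by auto
          consider "-v \<in> ?m \<and> u \<in> ?m" | "-v \<notin> ?m \<and> u \<in> ?m" | "-v \<in> ?m \<and> u \<notin> ?m" | "-v \<notin> ?m \<and> u \<notin> ?m" by blast
          then show ?thesis
          proof cases
            case 1
            have "-v - u \<in> ?L" using g(2) lat_neg unfolding g_def by (metis minus_add_distrib diff_conv_add_uminus add.commute)
            then have q1: "qclass P (-v) = qclass P u" using qclass_eq by blast
            have "-(-v) - (-u) \<in> ?L" using g(2) unfolding g_def by (simp add: add.commute)
            then have q2: "qclass P (-(-v)) = qclass P (-u)" using qclass_eq by blast
            have fe: "?f (-v) = ?f u" using q1 q2 by simp
            have vu: "-v \<in> Om" "-u \<in> Om" using 1 m_iff rs_neg[OF rs] by auto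
            have Nvu: "N g (-v) = - N g (-u)"
              by (rule Nrel[OF g(1) vu]) (simp add: g_def)
            have "k_act Om P N h1 h2 c' (upsilon Om P c) u v =
                  c' g * N g (-v) * ?f (-v) + c' g * N g (-u) * ?f u"
              unfolding K2 using 1 True g_def by simp
            also have "\<dots> = c' g * (- N g (-u)) * ?f u + c' g * N g (-u) * ?f u"
              by (simp only: fe Nvu)
            also have "\<dots> = 0"
              by (rule mult_minus_right_add_zero)
            finally show ?thesis .
          next
            case 2
            have "v \<notin> Om"
            proof
              assume "v \<in> Om"
              then have "-v \<in> Om" using rs_neg[OF rs] by blast
              moreover have "-v \<notin> ?L"
              proof
                assume "-v \<in> ?L"
                then have "g + (-v) \<in> ?L" using g lat_add by blast
                then show False using 2 unfolding g_def by (simp add: m_iff)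
              qed
              ultimately show False using 2 m_iff by blast
            qed
            moreover have "g + (-u) = v" unfolding g_def by simp
            moreover have uO: "-u \<in> Om" using 2 rs_neg[OF rs] by (simp add: m_iff)
            ultimately have "N g (-u) = 0" using Nnz[OF g(1) uO] by auto
            then show ?thesis unfolding K2 g_def[symmetric] using 2 by simp
          next
            case 3
            have "u \<notin> Om"
            proof
              assume "u \<in> Om"
              moreover have "u \<notin> ?L"
              proof
                assume "u \<in> ?L"
                then have "u - g \<in> ?L" using g lat_diff by blast
                then show False using 3 unfolding g_def by (simp add: m_iff)
              qed
              ultimately show False using 3 m_iff by blast
            qed
            moreover have "g + (-v) = u" unfolding g_def by simp
            moreover have vO: "-v \<in> Om" using 3 by (simp add: m_iff)
            ultimately have "N g (-v) = 0" using Nnz[OF g(1) vO] by auto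
            then show ?thesis unfolding K2 g_def[symmetric] using 3 by simp
          next
            case 4
            then show ?thesis unfolding K2 by simp
          qed
        qed
      qed
    qed
  qed
  have part2: "\<exists>c. w = upsilon Om P c \<and> (\<forall>A\<in>quasi_roots Om P. c (uminus ` A) = - c A)"
    if wm: "w \<in> wedge2_m Om P" and wk: "k_invariant Om P N w" for w
  proof -
    have anti: "\<And>u v. w u v = - w v u" and supp: "\<And>u v. w u v \<noteq> 0 \<Longrightarrow> u \<in> ?m \<and> v \<in> ?m"
      using wm unfolding wedge2_m_def by blast+
    have kz: "\<And>h1 h2 c u v. k_act Om P N h1 h2 c w u v = 0"
      using wk unfolding k_invariant_def by (metis)
    define phi where "phi x = w x (-x)" for x
    have step1: "v = -u" if nzw: "w u v \<noteq> 0" for u v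
    proof -
      have um: "u \<in> ?m" "v \<in> ?m" using supp[OF nzw] by auto
      let ?h = "u + v"
      have ad0: "\<And>x b. ad_k Om P N ?h 0 (\<lambda>_. 0) x b = (if x = b then root_eval b ?h 0 else 0)"
        by (simp add: ad_eq[OF finPsi])
      have finm: "finite ?m" using srs_fin[OF rs] unfolding roots_m_def by simp
      have "0 = k_act Om P N ?h 0 (\<lambda>_. 0) w u v" using kz by simp
      also have "\<dots> = (\<Sum>b\<in>?m. if b = u then root_eval u ?h 0 * w u v else 0) + (\<Sum>d\<in>?m. if d = v then root_eval v ?h 0 * w u v else 0)"
        unfolding k_act_def ad0 by (intro arg_cong2[where f = "(+)"] sum.cong) auto
      also have "\<dots> = (root_eval u ?h 0 + root_eval v ?h 0) * w u v"
        using finm um by (simp add: sum.delta' algebra_simps)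
      finally have "root_eval u ?h 0 + root_eval v ?h 0 = 0" using nzw by simp
      then have "complex_of_real (?h \<bullet> ?h) = 0" unfolding root_eval_def by (simp add: inner_add_left)
      then have "?h = 0" by simp
      then show ?thesis by (simp add: eq_neg_iff_add_eq_0 add.commute)
    qed
    have wform: "w u v = (if u \<in> ?m \<and> v = -u then phi u else 0)" for u v
    proof (cases "u \<in> ?m \<and> v = -u")
      case True
      then show ?thesis unfolding phi_def by simp
    next
      case False
      have "w u v = 0"
      proof (rule ccontr)
        assume h: "w u v \<noteq> 0"
        then have "u \<in> ?m" using supp by blast
        moreover have "v = -u" using step1[OF h] .
        ultimately show False using False by blast
      qed
      moreover have "(if u \<in> ?m \<and> v = -u then phi u else 0) = 0" using False by (rule if_not_P)
      ultimately show ?thesis by simp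
    qed
    have phineg: "phi (-x) = - phi x" for x unfolding phi_def using anti[of "-x" x] by simp
    have inv: "\<And>u g. u \<in> Om \<Longrightarrow> u \<notin> ?L \<Longrightarrow> g \<in> ?Psi \<Longrightarrow> u - g \<in> Om \<Longrightarrow> phi u = phi (u - g)"
    proof -
      fix u g assume u: "u \<in> Om" "u \<notin> ?L" and gP: "g \<in> ?Psi" and ug: "u - g \<in> Om"
      have g: "g \<in> Om" "g \<in> ?L" using gP Psi_iff by auto
      have g0: "g \<noteq> 0" using g nz by auto
      have um: "u \<in> ?m" using u m_iff by auto
      have ugm: "u - g \<in> ?m" using ug u g lat_add m_iff by (metis diff_add_cancel)
      let ?c = "\<lambda>x. if x = g then (1::complex) else 0"
      have re0: "\<And>x. root_eval x 0 0 = 0" unfolding root_eval_def by simp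
      have "0 = k_act Om P N 0 0 ?c w u (g - u)" using kz by simp
      also have "\<dots> = (if -(g - u) \<in> ?m then ad_k Om P N 0 0 ?c u (-(g - u)) * phi (-(g - u)) else 0) +
                     (if u \<in> ?m then ad_k Om P N 0 0 ?c (g - u) (-u) * phi u else 0)"
        by (rule kact_form[OF rs wform])
      also have "\<dots> = N g (u - g) * phi (u - g) + N g (-u) * phi u"
        using ugm um g0 gP by (simp add: ad_eq[OF finPsi] re0)
      finally have e: "N g (u - g) * phi (u - g) + N g (-u) * phi u = 0" by simp
      have "N g (u - g) = - N g (-u)" using Nrel[OF g(1) ug rs_neg[OF rs u(1)]] by simp
      moreover have "N g (-u) \<noteq> 0"
      proof -
        have "-(u - g) \<in> Om" using rs_neg[OF rs ug] .
        then show ?thesis using Nnz[OF g(1) rs_neg[OF rs u(1)]] by (simp add: algebra_simps)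
      qed
      ultimately show "phi u = phi (u - g)" using e by (simp add: algebra_simps)
    qed
    have const: "phi a = phi b" if a: "a \<in> ?m" and b: "b \<in> ?m" and ab: "a - b \<in> ?L" for a b
    proof -
      obtain M where M: "set_mset M \<subseteq> ?Psi" "sum_mset M = a - b" using lat_mset[OF rs assms(2) ab] by blast
      show ?thesis
        by (rule conn_mset[OF rs Psi_iff lat_add lat_neg inv]) (use M a b in \<open>auto simp: m_iff\<close>)
    qed
    define c where "c A = phi (SOME b. b \<in> Om \<and> qclass P b = A) / 2" for A
    have cval: "c (qclass P x) = phi x / 2" if x: "x \<in> ?m" for x
    proof -
      have ex: "\<exists>b. b \<in> Om \<and> qclass P b = qclass P x" using x m_iff by blast
      define r where "r = (SOME b. b \<in> Om \<and> qclass P b = qclass P x)"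
      have r: "r \<in> Om" "qclass P r = qclass P x" using someI_ex[OF ex] unfolding r_def by blast+
      have rx: "r - x \<in> ?L" using r(2) qclass_eq by blast
      have "r \<notin> ?L"
      proof
        assume "r \<in> ?L"
        then have "r - (r - x) \<in> ?L" using rx lat_diff by blast
        then show False using x by (simp add: m_iff)
      qed
      then have "r \<in> ?m" using r m_iff by blast
      then have "phi r = phi x" using const x rx by blast
      then show ?thesis unfolding c_def r_def[symmetric] by simp
    qed
    show ?thesis
    proof (intro exI conjI ballI)
      show "w = upsilon Om P c"
      proof (intro ext)
        fix u v
        show "w u v = upsilon Om P c u v"
        proof (cases "u \<in> ?m \<and> v = -u")
          case True
          have e1: "c (qclass P u) = phi u / 2" using cval True by blast
          have e2: "c (qclass P (-u)) = - phi u / 2" using cval[OF m_neg[OF rs, of u P]] True phineg by simp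
          show ?thesis unfolding ups_formula[OF rs] wform using True by (simp add: e1 e2 field_simps)
        next
          case False
          show ?thesis unfolding ups_formula[OF rs] wform if_not_P[OF False] ..
        qed
      qed
    next
      fix A assume "A \<in> quasi_roots Om P"
      then obtain x where x: "x \<in> ?m" "A = qclass P x" unfolding quasi_roots_def by blast
      show "c (uminus ` A) = - c A"
        unfolding x(2) qclass_neg using cval[OF x(1)] cval[OF m_neg[OF rs x(1)]] phineg by simp
    qed
  qed
  show ?thesis using part1 part2 by blast
qed

end
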